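(* Let $\lambda \ge \aleph_2$ be a regular cardinal and $S \subseteq \lambda$ stationary. Then the following are equivalent: (1) $\mathsf{uDSR}({<}\lambda, S)$; (2) $\mathsf{DSR}({<}\lambda, S)$; (3) $\mathsf{OSR}(S)$; (4) for every matrix $\langle S_{\alpha,i} \mid \alpha<\lambda,\ i<j_\alpha\rangle$ of stationary subsets of $S$ with $j_\alpha<\lambda$ for all $\alpha<\lambda$, there is $\gamma<\lambda$ with $\mathrm{cf}(\gamma)>\omega$ such that $S_{\alpha,i}$ reflects at $\gamma$ for all $\alpha<\gamma$ and all $i<j_\alpha$.
   Context: A set $T$ of ordinals reflects at an ordinal $\gamma$ if $\mathrm{cf}(\gamma)>\omega$ and $T\cap\gamma$ is stationary in $\gamma$. For $\lambda$ regular uncountable, $S\subseteq\lambda$ stationary and $\kappa\le\lambda$: $\mathsf{DSR}({<}\kappa,S)$ asserts that whenever $\langle S_{\alpha,i}\mid\alpha<\lambda,\ i<j_\alpha\rangle$ is a matrix of stationary subsets of $S$ with $j_\alpha<\kappa$ for all $\alpha$, there are $\gamma<\lambda$ of uncountable cofinality and a club $F\subseteq\gamma$ such that $S_{\alpha,i}$ reflects at $\gamma$ for all $\alpha\in F$, $i<j_\alpha$. $\mathsf{uDSR}({<}\kappa,S)$ is the same with "club $F\subseteq\gamma$" replaced by "unbounded $F\subseteq\gamma$". $\mathsf{OSR}(S)$ asserts that for every sequence $\langle S_\alpha\mid\alpha<\lambda\rangle$ of stationary subsets of $S$ there is $\delta<\lambda$ with $\mathrm{cf}(\delta)>\omega$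 such that $S_\alpha$ reflects at $\delta$ for all $\alpha<\delta$. *)

theory Defs
  imports Main "HOL-Library.Countable_Set"
begin

text \<open>Ordinals below a regular cardinal lambda are modelled as the elements of a
  well-ordered type 'a whose order type is lambda (lambda = UNIV).
  A "bound" D is either {..<gamma} (the ordinal gamma) or UNIV (lambda itself).\<close>

definition unbounded_in :: "'a::wellorder set \<Rightarrow> 'a set \<Rightarrow> bool" where
  "unbounded_in D C \<longleftrightarrow> C \<subseteq> D \<and> (\<forall>b\<in>D. \<exists>x\<in>C. b < x)"

definition closed_in :: "'a::wellorder set \<Rightarrow> 'a set \<Rightarrow> bool" where
  "closed_in D C \<longleftrightarrow>
     (\<forall>b\<in>D. (\<exists>x\<in>C. x < b) \<and> (\<forall>d<b. \<exists>x\<in>C. d < x \<and> x < b) \<longrightarrow> b \<in> C)"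

definition club_in :: "'a::wellorder set \<Rightarrow> 'a set \<Rightarrow> bool" where
  "club_in D C \<longleftrightarrow> unbounded_in D C \<and> closed_in D C"

definition stationary_in :: "'a::wellorder set \<Rightarrow> 'a set \<Rightarrow> bool" where
  "stationary_in D T \<longleftrightarrow> T \<subseteq> D \<and> (\<forall>C. club_in D C \<longrightarrow> T \<inter> C \<noteq> {})"

definition uncountable_cf :: "'a::wellorder \<Rightarrow> bool" where
  "uncountable_cf g \<longleftrightarrow> (\<exists>b. b < g) \<and>
     (\<forall>A. A \<subseteq> {..<g} \<and> countable A \<longrightarrow> (\<exists>b<g. \<forall>x\<in>A. x < b))"

definition reflects_at :: "'a::wellorder set \<Rightarrow> 'a \<Rightarrow> bool" where
  "reflects_at T g \<longleftrightarrow> uncountable_cf g \<and> stationary_in {..<g} (T \<inter> {..<g})"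

definition regular_ge_aleph2 :: "'a::wellorder itself \<Rightarrow> bool" where
  "regular_ge_aleph2 _ \<longleftrightarrow>
     (\<forall>x::'a. ordLess2 (card_of {..<x}) (card_of (UNIV::'a set))) \<and>
     (\<forall>A::'a set. ordLess2 (card_of A) (card_of (UNIV::'a set)) \<longrightarrow> (\<exists>b. \<forall>x\<in>A. x < b)) \<and>
     ordLess2 (cardSuc natLeq) (card_of (UNIV::'a set))"

text \<open>DSR(<kappa, S): lengths j alpha range over K, where K = {..<kappa} or K = UNIV (kappa = lambda).\<close>
definition DSR :: "'a::wellorder set \<Rightarrow> 'a set \<Rightarrow> bool" where
  "DSR K S \<longleftrightarrow> (\<forall>(M::'a \<Rightarrow> 'a \<Rightarrow> 'a set) (j::'a \<Rightarrow> 'a).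
     (\<forall>a. j a \<in> K) \<and> (\<forall>a i. i < j a \<longrightarrow> M a i \<subseteq> S \<and> stationary_in UNIV (M a i)) \<longrightarrow>
     (\<exists>g F. uncountable_cf g \<and> club_in {..<g} F \<and> (\<forall>a\<in>F. \<forall>i<j a. reflects_at (M a i) g)))"

definition uDSR :: "'a::wellorder set \<Rightarrow> 'a set \<Rightarrow> bool" where
  "uDSR K S \<longleftrightarrow> (\<forall>(M::'a \<Rightarrow> 'a \<Rightarrow> 'a set) (j::'a \<Rightarrow> 'a).
     (\<forall>a. j a \<in> K) \<and> (\<forall>a i. i < j a \<longrightarrow> M a i \<subseteq> S \<and> stationary_in UNIV (M a i)) \<longrightarrow>
     (\<exists>g F. uncountable_cf g \<and> unbounded_in {..<g} F \<and> (\<forall>a\<in>F. \<forall>i<j a. reflects_at (M a i) g)))"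

definition OSR :: "'a::wellorder set \<Rightarrow> bool" where
  "OSR S \<longleftrightarrow> (\<forall>T::'a \<Rightarrow> 'a set.
     (\<forall>a. T a \<subseteq> S \<and> stationary_in UNIV (T a)) \<longrightarrow>
     (\<exists>d. uncountable_cf d \<and> (\<forall>a<d. reflects_at (T a) d)))"

end

theory Submission imports Defs begin

lemma ucf_unb: "uncountable_cf (g::'a::wellorder) \<Longrightarrow> b < g \<Longrightarrow> \<exists>x<g. b < x"
  unfolding uncountable_cf_def
  by (drule conjunct2, drule spec[of _ "{b}"]) auto

lemma ucf_club: "uncountable_cf (g::'a::wellorder) \<Longrightarrow> club_in {..<g} {..<g}"
  unfolding club_in_def unbounded_in_def closed_in_def using ucf_unb by fastforce

lemma empty_not_refl: "\<not> reflects_at {} (g::'a::wellorder)"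
  unfolding reflects_at_def stationary_in_def using ucf_club by blast

lemma refl_mono: "reflects_at T g \<Longrightarrow> T \<subseteq> T' \<Longrightarrow> reflects_at T' (g::'a::wellorder)"
  unfolding reflects_at_def stationary_in_def by blast

lemma refl_bound: "reflects_at (T \<inter> {e..}) g \<Longrightarrow> e < (g::'a::wellorder)"
proof (rule ccontr)
  assume "reflects_at (T \<inter> {e..}) g" "\<not> e < g"
  then have "reflects_at (T \<inter> {e..}) g" "T \<inter> {e..} \<inter> {..<g} = {}" by auto
  then show False using empty_not_refl[of g] unfolding reflects_at_def by simp
qed

lemma stat_tail:
  assumes "stationary_in UNIV (T::'a::wellorder set)" "\<forall>b::'a. \<exists>x. b < x"
  shows "stationary_in UNIV (T \<inter> {e..})"
  unfolding stationary_in_def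
proof safe
  fix C x assume C: "club_in UNIV C" and h: "T \<inter> {e..} \<inter> C = {}"
  have "club_in UNIV (C \<inter> {e..})"
    unfolding club_in_def unbounded_in_def closed_in_def
  proof (intro conjI ballI impI)
    fix b
    obtain y where y: "max b e < y" using assms(2) by blast
    obtain x where "x \<in> C" "y < x" using C unfolding club_in_def unbounded_in_def by blast
    then show "\<exists>x\<in>C \<inter> {e..}. b < x" using y by (intro bexI[of _ x]) auto
  next
    fix b assume "b \<in> UNIV" "(\<exists>x\<in>C \<inter> {e..}. x < b) \<and> (\<forall>d<b. \<exists>x\<in>C \<inter> {e..}. d < x \<and> x < b)"
    then show "b \<in> C \<inter> {e..}" using C unfolding club_in_def closed_in_def by fastforce
  qed simp
  then show False using assms(1) h unfolding stationary_in_def by blast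
qed simp

lemma nomax_lem:
  assumes reg: "regular_ge_aleph2 TYPE('a::wellorder)"
  shows "\<forall>b::'a. \<exists>x. b < x"
proof -
  note R = reg[unfolded regular_ge_aleph2_def]
  note bnd = R[THEN conjunct2, THEN conjunct1, rule_format]
  note big = R[THEN conjunct2, THEN conjunct2]
  have "ordLess2 natLeq (card_of (UNIV::'a set))"
    using ordLeq_ordLess_trans[OF ordLess_imp_ordLeq[OF cardSuc_greater[OF natLeq_Card_order]] big] .
  then have inf: "infinite (UNIV::'a set)"
    using infinite_iff_natLeq_ordLeq ordLess_imp_ordLeq by blast
  show ?thesis
  proof
    fix b :: 'a
    have "ordLess2 (card_of {b}) (card_of (UNIV::'a set))"
      using finite_ordLess_infinite[OF card_of_Well_order card_of_Well_order, of "{b}" UNIV] inf by (simp add: Field_card_of)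
    then obtain c where "\<forall>x\<in>{b}. x < c" using bnd by blast
    then show "\<exists>x. b < x" by auto
  qed
qed

lemma main_dir:
  fixes S :: "'a::wellorder set" and M :: "'a \<Rightarrow> 'a \<Rightarrow> 'a set" and j :: "'a \<Rightarrow> 'a"
  assumes reg: "regular_ge_aleph2 TYPE('a)" and osr: "OSR S" and stS: "stationary_in UNIV S"
    and hyp: "\<forall>a i. i < j a \<longrightarrow> M a i \<subseteq> S \<and> stationary_in UNIV (M a i)"
  shows "\<exists>g. uncountable_cf g \<and> (\<forall>a<g. \<forall>i<j a. reflects_at (M a i) g)"
proof -
  note R = reg[unfolded regular_ge_aleph2_def]
  note small = R[THEN conjunct1, rule_format]
  note bnd = R[THEN conjunct2, THEN conjunct1, rule_format]
  note big = R[THEN conjunct2, THEN conjunct2]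
  have "ordLess2 natLeq (card_of (UNIV::'a set))"
    using ordLeq_ordLess_trans[OF ordLess_imp_ordLeq[OF cardSuc_greater[OF natLeq_Card_order]] big] .
  then have inf: "infinite (UNIV::'a set)"
    using infinite_iff_natLeq_ordLeq ordLess_imp_ordLeq by blast
  have nomax: "\<forall>b::'a. \<exists>x. b < x" by (rule nomax_lem[OF reg])
  have "ordLeq3 (card_of ((UNIV::'a set) \<times> (UNIV::'a set))) (card_of (UNIV::'a set))"
    using card_of_Times_same_infinite[OF inf] unfolding ordIso_iff_ordLeq by (rule conjunct1)
  then have "\<exists>f. inj_on f ((UNIV::'a set) \<times> (UNIV::'a set)) \<and> f ` (UNIV \<times> UNIV) \<subseteq> (UNIV::'a set)"
    by (rule card_of_ordLeq[THEN iffD2])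
  then obtain f :: "'a \<times> 'a \<Rightarrow> 'a" where finj: "inj f"
    by auto
  have "\<forall>b. \<exists>e. \<forall>i<j b. f (b, i) < e"
  proof
    fix b
    have "ordLeq3 (card_of ((\<lambda>i. f (b, i)) ` {..<j b})) (card_of {..<j b})" by (rule card_of_image)
    then have "ordLess2 (card_of ((\<lambda>i. f (b, i)) ` {..<j b})) (card_of (UNIV::'a set))"
      using small ordLeq_ordLess_trans by blast
    then obtain e where "\<forall>x\<in>(\<lambda>i. f (b, i)) ` {..<j b}. x < e" using bnd by blast
    then show "\<exists>e. \<forall>i<j b. f (b, i) < e" by auto
  qed
  from choice[OF this] obtain e where e: "\<forall>b. \<forall>i<j b. f (b, i) < e b" by blast
  define P where "P = (\<lambda>\<beta>. \<beta> \<in> range f \<and> snd (inv f \<beta>) < j (fst (inv f \<beta>)))"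
  define U where "U = (\<lambda>\<beta>. if P \<beta> then M (fst (inv f \<beta>)) (snd (inv f \<beta>)) else S)"
  define T where "T = (\<lambda>\<beta>. U \<beta> \<inter> {e \<beta>..})"
  have "\<forall>\<beta>. T \<beta> \<subseteq> S \<and> stationary_in UNIV (T \<beta>)"
  proof
    fix \<beta>
    have "U \<beta> \<subseteq> S \<and> stationary_in UNIV (U \<beta>)"
      unfolding U_def P_def using hyp stS by auto
    then show "T \<beta> \<subseteq> S \<and> stationary_in UNIV (T \<beta>)"
      unfolding T_def using stat_tail[OF _ nomax, of "U \<beta>" "e \<beta>"] by blast
  qed
  then obtain d where d: "uncountable_cf d" "\<forall>a<d. reflects_at (T a) d"
    using osr unfolding OSR_def by blast
  have "\<forall>a<d. \<forall>i<j a. reflects_at (M a i) d"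
  proof (intro allI impI)
    fix a i assume ad: "a < d" and ij: "i < j a"
    have "reflects_at (U a \<inter> {e a..}) d" using d(2) ad unfolding T_def by blast
    then have "e a < d" by (rule refl_bound)
    then have fd: "f (a, i) < d" using e ij by (meson less_trans)
    have inv: "inv f (f (a, i)) = (a, i)" using finj by simp
    have "P (f (a, i))" unfolding P_def inv using ij by simp
    then have "U (f (a, i)) = M a i" unfolding U_def inv by simp
    then have "T (f (a, i)) \<subseteq> M a i" unfolding T_def by blast
    then show "reflects_at (M a i) d" using d(2) fd refl_mono by blast
  qed
  then show ?thesis using d(1) by blast
qed

theorem lemma2p3:
  fixes S :: "'a::wellorder set"
  assumes "regular_ge_aleph2 TYPE('a)"
    and "stationary_in UNIV S"
  shows "(uDSR UNIV S \<longleftrightarrow> DSR UNIV S) \<and> (DSR UNIV S \<longleftrightarrow> OSR S) \<and>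
    (OSR S \<longleftrightarrow>
      (\<forall>(M::'a \<Rightarrow> 'a \<Rightarrow> 'a set) (j::'a \<Rightarrow> 'a).
         (\<forall>a i. i < j a \<longrightarrow> M a i \<subseteq> S \<and> stationary_in UNIV (M a i)) \<longrightarrow>
         (\<exists>g. uncountable_cf g \<and> (\<forall>a<g. \<forall>i<j a. reflects_at (M a i) g))))"
    (is "_ \<and> _ \<and> (_ \<longleftrightarrow> ?P4)")
proof -
  have nomax: "\<forall>b::'a. \<exists>x. b < x" by (rule nomax_lem[OF assms(1)])
  have u_o: "uDSR UNIV S \<Longrightarrow> OSR S"
    unfolding OSR_def
  proof (intro allI impI)
    fix T :: "'a \<Rightarrow> 'a set"
    assume u: "uDSR UNIV S" and T: "\<forall>a. T a \<subseteq> S \<and> stationary_in UNIV (T a)"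
    obtain g F where g: "uncountable_cf g" "unbounded_in {..<g} F"
      "\<forall>a\<in>F. \<forall>i<a. reflects_at (T i) g"
      using u T unfolding uDSR_def
      apply -
      apply (drule spec[of _ "\<lambda>a i. T i"], drule spec[of _ "\<lambda>a. a"])
      by auto
    have "\<forall>a<g. reflects_at (T a) g"
      using g(2,3) unfolding unbounded_in_def by fastforce
    then show "\<exists>d. uncountable_cf d \<and> (\<forall>a<d. reflects_at (T a) d)" using g(1) by blast
  qed
  have o_4: "OSR S \<Longrightarrow> ?P4" using main_dir[OF assms(1) _ assms(2)] by blast
  have f4_d: "?P4 \<Longrightarrow> DSR UNIV S"
    unfolding DSR_def
  proof (intro allI impI)
    fix M :: "'a \<Rightarrow> 'a \<Rightarrow> 'a set" and j :: "'a \<Rightarrow> 'a" assume p: ?P4 and h: "(\<forall>a. j a \<in> (UNIV::'a set)) \<and> (\<forall>a i. i < j a \<longrightarrow> M a i \<subseteq> S \<and> stationary_in UNIV (M a i))"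
    obtain g where "uncountable_cf g" "\<forall>a<g. \<forall>i<j a. reflects_at (M a i) g"
      using p h by blast
    then show "\<exists>g F. uncountable_cf g \<and> club_in {..<g} F \<and> (\<forall>a\<in>F. \<forall>i<j a. reflects_at (M a i) g)"
      using ucf_club by (intro exI[of _ g] exI[of _ "{..<g}"]) auto
  qed
  have d_u: "DSR UNIV S \<Longrightarrow> uDSR UNIV S"
    unfolding DSR_def uDSR_def club_in_def by blast
  have o4: "?P4 \<Longrightarrow> OSR S"
    unfolding OSR_def
  proof (intro allI impI)
    fix T :: "'a \<Rightarrow> 'a set"
    assume p: ?P4 and T: "\<forall>a. T a \<subseteq> S \<and> stationary_in UNIV (T a)"
    obtain c :: 'a where c: "(undefined::'a) < c" using nomax by blast
    obtain g where "uncountable_cf g" "\<forall>a<g. \<forall>i<c. reflects_at (T a) g"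
      using p T
      apply -
      apply (drule spec[of _ "\<lambda>a i. T a"], drule spec[of _ "\<lambda>a. c"])
      by auto
    then show "\<exists>d. uncountable_cf d \<and> (\<forall>a<d. reflects_at (T a) d)" using c by blast
  qed
  show ?thesis using u_o o_4 f4_d d_u o4 by blast
qed

end
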